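(* Let $T\in\mathrm{Aut}(X,\mu)$ be aperiodic and $\varphi$ a metric-compatible function. For every $U\in[T]_\varphi$ and every measurable $A\subseteq X$, one has $d_{\varphi,T}(U_A,\mathrm{id})\le d_{\varphi,T}(U,\mathrm{id})$; in particular $U_A\in[T]_\varphi$.
   Context: $(X,\mu)$ standard atomless probability space; $\mathrm{Aut}(X,\mu)$ measure-preserving transformations modulo null sets. For aperiodic $T$, $[T]$ is the set of $U\in\mathrm{Aut}(X,\mu)$ with $U(x)=T^{c_U(x)}(x)$ a.e. for a measurable $c_U:X\to\mathbb Z$. $\varphi:\mathbb R_+\to\mathbb R_+$ is metric-compatible if subadditive, non-decreasing, $\varphi(0)=0$, $\varphi(t)>0$ for $t>0$. $[T]_\varphi=\{U\in[T]:\int_X\varphi(|c_U|)d\mu<\infty\}$, $d_{\varphi,T}(U,V)=\int_X\varphi(|c_U(x)-c_V(x)|)d\mu$. For $U\in\mathrm{Aut}(X,\mu)$ and measurable $A$, the first return map $U_A$ is defined by $U_A(x)=U^{n(x)}(x)$ with $n(x)=\min\{n\ge1:U^n(x)\in A\}$ for $x\in A$ (defined a.e. by Poincaré recurrence) and $U_A(x)=x$ for $x\notin A$. *)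

theory Defs
  imports "HOL-Analysis.Analysis"
begin

text \<open>The standard atomless probability space (X,mu), modelled (up to isomorphism)
  by the unit interval with Lebesgue (Borel) measure.\<close>
definition X\<mu> :: "real measure" where
  "X\<mu> = restrict_space lborel {0..1}"

definition Aut :: "(real \<Rightarrow> real) set" where
  "Aut = {U. U \<in> measurable X\<mu> X\<mu> \<and> distr X\<mu> X\<mu> U = X\<mu> \<and>
     (\<exists>V \<in> measurable X\<mu> X\<mu>. (AE x in X\<mu>. V (U x) = x) \<and> (AE x in X\<mu>. U (V x) = x))}"

definition aperiodic :: "(real \<Rightarrow> real) \<Rightarrow> bool" where
  "aperiodic T \<longleftrightarrow> (\<forall>n::nat. n \<ge> 1 \<longrightarrow> (AE x in X\<mu>. (T ^^ n) x \<noteq> x))"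

text \<open>c is a cocycle for U, i.e. U(x) = T^(c x)(x) a.e.; for negative c x this is
  expressed as T^(-c x)(U x) = x (T being invertible mod null sets).\<close>
definition is_cocycle :: "(real \<Rightarrow> real) \<Rightarrow> (real \<Rightarrow> real) \<Rightarrow> (real \<Rightarrow> int) \<Rightarrow> bool" where
  "is_cocycle T U c \<longleftrightarrow> c \<in> measurable X\<mu> (count_space UNIV) \<and>
     (AE x in X\<mu>. (c x \<ge> 0 \<longrightarrow> (T ^^ nat (c x)) x = U x) \<and>
                   (c x < 0 \<longrightarrow> (T ^^ nat (- c x)) (U x) = x))"

definition full_group :: "(real \<Rightarrow> real) \<Rightarrow> (real \<Rightarrow> real) set" where
  "full_group T = {U \<in> Aut. \<exists>c. is_cocycle T U c}"

definition cocycle :: "(real \<Rightarrow> real) \<Rightarrow> (real \<Rightarrow> real) \<Rightarrow> real \<Rightarrow> int" where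
  "cocycle T U = (SOME c. is_cocycle T U c)"

definition metric_compatible :: "(real \<Rightarrow> real) \<Rightarrow> bool" where
  "metric_compatible \<phi> \<longleftrightarrow>
     (\<forall>s\<ge>0. \<forall>t\<ge>0. \<phi> (s + t) \<le> \<phi> s + \<phi> t) \<and>
     (\<forall>s t. 0 \<le> s \<longrightarrow> s \<le> t \<longrightarrow> \<phi> s \<le> \<phi> t) \<and>
     \<phi> 0 = 0 \<and> (\<forall>t>0. \<phi> t > 0)"

definition d_phi :: "(real \<Rightarrow> real) \<Rightarrow> (real \<Rightarrow> real) \<Rightarrow> (real \<Rightarrow> real) \<Rightarrow> (real \<Rightarrow> real) \<Rightarrow> ennreal" where
  "d_phi \<phi> T U V = (\<integral>\<^sup>+ x. ennreal (\<phi> (real_of_int \<bar>cocycle T U x - cocycle T V x\<bar>)) \<partial>X\<mu>)"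

definition full_group_phi :: "(real \<Rightarrow> real) \<Rightarrow> (real \<Rightarrow> real) \<Rightarrow> (real \<Rightarrow> real) set" where
  "full_group_phi \<phi> T = {U \<in> full_group T.
      (\<integral>\<^sup>+ x. ennreal (\<phi> (real_of_int \<bar>cocycle T U x\<bar>)) \<partial>X\<mu>) < \<infinity>}"

definition first_return :: "(real \<Rightarrow> real) \<Rightarrow> real set \<Rightarrow> real \<Rightarrow> real" where
  "first_return U A x =
     (if x \<in> A \<and> (\<exists>n::nat. n \<ge> 1 \<and> (U ^^ n) x \<in> A)
      then (U ^^ (LEAST n::nat. n \<ge> 1 \<and> (U ^^ n) x \<in> A)) x else x)"

end

theory Submission
  imports Defs "HOL-Probability.Probability_Measure"
begin

abbreviation M :: "real measure" where "M \<equiv> X\<mu>"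

lemma funpow_split: "i \<le> j \<Longrightarrow> (f^^j) x = (f^^(j-i)) ((f^^i) x)"
  by (metis funpow_add le_add_diff_inverse2 comp_apply)

lemma suminf_single_ennreal:
  assumes "\<And>n. n \<noteq> m \<Longrightarrow> f n = 0"
  shows "(\<Sum>n. f n) = (f m :: ennreal)"
proof -
  have "f = (\<lambda>r. if r = m then f r else 0)" using assms by auto
  then show ?thesis using sums_unique[OF sums_single[of m f]] by metis
qed

lemma space_M: "space M = {0..1}"
  by (simp add: X\<mu>_def space_restrict_space)

lemma prob_M: "prob_space M"
proof
  have "emeasure M (space M) = emeasure lborel {0..(1::real)}"
    unfolding space_M by (simp add: X\<mu>_def emeasure_restrict_space)
  then show "emeasure M (space M) = 1" by simp
qed

interpretation PM: prob_space M by (rule prob_M)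

locale mpi =
  fixes U V :: "real \<Rightarrow> real"
  assumes Um[measurable]: "U \<in> measurable M M" and Vm[measurable]: "V \<in> measurable M M"
    and Ud: "distr M M U = M"
    and VU: "AE x in M. V (U x) = x" and UV: "AE x in M. U (V x) = x"
begin

lemma Vd: "distr M M V = M"
proof (rule measure_eqI)
  show "sets (distr M M V) = sets M" by simp
  fix B assume "B \<in> sets (distr M M V)"
  then have B[measurable]: "B \<in> sets M" by simp
  have "emeasure (distr M M V) B = emeasure M (V -` B \<inter> space M)"
    by (simp add: emeasure_distr)
  also have "\<dots> = emeasure (distr M M U) (V -` B \<inter> space M)" using Ud by simp
  also have "\<dots> = emeasure M (U -` (V -` B \<inter> space M) \<inter> space M)"
    by (rule emeasure_distr) (auto intro: Um)
  also have "\<dots> = emeasure M B"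
  proof (rule emeasure_eq_AE)
    show "AE x in M. (x \<in> U -` (V -` B \<inter> space M) \<inter> space M) = (x \<in> B)"
      using VU by eventually_elim (use measurable_space[OF Um] sets.sets_into_space[OF B] in auto)
  qed auto
  finally show "emeasure (distr M M V) B = emeasure M B" .
qed

lemma Upow_m[measurable]: "(U ^^ n) \<in> measurable M M"
  by (induction n) (auto intro: measurable_comp[OF _ Um] simp: funpow_Suc_right)

lemma Upow_d: "distr M M (U ^^ n) = M"
proof (induction n)
  case 0 then show ?case by (simp add: distr_id[unfolded id_def] id_def)
next
  case (Suc n)
  have e: "U ^^ Suc n = U ^^ n \<circ> U" by (rule funpow_Suc_right)
  have "distr M M (U ^^ Suc n) = distr (distr M M U) M (U ^^ n)"
    unfolding e by (subst distr_distr) (auto intro: Upow_m Um)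
  then show ?case using Suc Ud by (simp only:)
qed

lemma AE_U: "AE x in M. P x \<Longrightarrow> AE x in M. P ((U ^^ n) x)"
  by (rule AE_distrD[OF Upow_m]) (simp only: Upow_d)

lemma nn_U: "f \<in> borel_measurable M \<Longrightarrow> (\<integral>\<^sup>+ x. f ((U ^^ n) x) \<partial>M) = (\<integral>\<^sup>+ x. f x \<partial>M)"
  using nn_integral_distr[OF Upow_m, of f n] by (simp add: Upow_d)

lemma poincare:
  assumes A[measurable]: "A \<in> sets M"
  shows "AE x in M. x \<in> A \<longrightarrow> (\<exists>n\<ge>1. (U ^^ n) x \<in> A)"
proof -
  define W where "W = {x\<in>space M. x\<in>A \<and> (\<forall>n\<ge>1. (U^^n) x \<notin> A)}"
  have Wm[measurable]: "W \<in> sets M" unfolding W_def by measurable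
  define Wk where "Wk k = (U^^k) -` W \<inter> space M" for k
  have Wkm[measurable]: "Wk k \<in> sets M" for k unfolding Wk_def by measurable
  have meas: "measure M (Wk k) = measure M W" for k
  proof -
    have "emeasure M (Wk k) = emeasure (distr M M (U^^k)) W"
      unfolding Wk_def by (rule emeasure_distr[symmetric]) auto
    then show ?thesis by (simp add: Upow_d measure_def)
  qed
  have disj: "Wk i \<inter> Wk j = {}" if "i < j" for i j
  proof (rule ccontr)
    assume "Wk i \<inter> Wk j \<noteq> {}"
    then obtain x where x: "x \<in> Wk i" "x \<in> Wk j" by blast
    have "(U^^j) x = (U^^(j-i)) ((U^^i) x)" using that by (simp add: funpow_split)
    with x that show False unfolding Wk_def W_def by auto
  qed
  have df: "disjoint_family Wk"
    unfolding disjoint_family_on_def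
    by (metis disj inf_commute linorder_neqE_nat)
  have bound: "real n * measure M W \<le> 1" for n
  proof -
    have "real n * measure M W = (\<Sum>k<n. measure M (Wk k))" by (simp add: meas)
    also have "\<dots> = measure M (\<Union>k<n. Wk k)"
      by (rule measure_finite_Union[symmetric]) (auto intro: disjoint_family_on_mono[OF _ df] simp: PM.emeasure_finite)
    also have "\<dots> \<le> 1" by (rule PM.prob_le_1)
    finally show ?thesis .
  qed
  have "measure M W = 0"
  proof (rule ccontr)
    assume "measure M W \<noteq> 0"
    then have pos: "measure M W > 0" using measure_nonneg[of M W] by linarith
    obtain n where "1 / measure M W < real n" using reals_Archimedean2 by blast
    then have "1 < real n * measure M W" using pos by (simp add: field_simps)
    with bound[of n] show False by simp
  qed
  then have "W \<in> null_sets M" by (simp add: PM.emeasure_eq_measure null_sets_def)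
  then show ?thesis by (rule AE_I') (auto simp: W_def)
qed

end

context mpi
begin

lemma swapI: "mpi V U"
  by unfold_locales (auto simp: Vd VU UV)

lemma UVpow: "AE y in M. (U^^n) ((V^^n) y) = y"
proof (induction n)
  case 0 then show ?case by simp
next
  case (Suc n)
  have "AE y in M. U (V ((V^^n) y)) = (V^^n) y" by (rule mpi.AE_U[OF swapI UV])
  with Suc show ?case
  proof eventually_elim
    case (elim y)
    have "(U^^Suc n) ((V^^Suc n) y) = (U^^n) (U (V ((V^^n) y)))"
      by (simp add: funpow_swap1)
    with elim show ?case by simp
  qed
qed

lemma transfer:
  assumes [measurable]: "g \<in> borel_measurable M" "h \<in> borel_measurable M"
  shows "(\<integral>\<^sup>+ x. g x * h ((U^^n) x) \<partial>M) = (\<integral>\<^sup>+ y. g ((V^^n) y) * h y \<partial>M)"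
proof -
  have "(\<integral>\<^sup>+ y. g ((V^^n) y) * h y \<partial>M) = (\<integral>\<^sup>+ x. g ((V^^n) ((U^^n) x)) * h ((U^^n) x) \<partial>M)"
    by (rule nn_U[symmetric]) measurable
  also have "\<dots> = (\<integral>\<^sup>+ x. g x * h ((U^^n) x) \<partial>M)"
    by (rule nn_integral_cong_AE) (use mpi.UVpow[OF swapI, of n] in \<open>eventually_elim, simp\<close>)
  finally show ?thesis by simp
qed

end

definition ret :: "(real \<Rightarrow> real) \<Rightarrow> real set \<Rightarrow> real \<Rightarrow> bool" where
  "ret U A x \<longleftrightarrow> (\<exists>n::nat. n \<ge> 1 \<and> (U ^^ n) x \<in> A)"

definition Nr :: "(real \<Rightarrow> real) \<Rightarrow> real set \<Rightarrow> real \<Rightarrow> nat" where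
  "Nr U A x = (LEAST n::nat. n \<ge> 1 \<and> (U ^^ n) x \<in> A)"

definition Dset :: "(real \<Rightarrow> real) \<Rightarrow> real set \<Rightarrow> nat \<Rightarrow> real set" where
  "Dset U A n = {x\<in>space M. x \<in> A \<and> 1 \<le> n \<and> (U^^n) x \<in> A \<and> (\<forall>k. 1 \<le> k \<and> k < n \<longrightarrow> (U^^k) x \<notin> A)}"

definition Eset :: "(real \<Rightarrow> real) \<Rightarrow> real set \<Rightarrow> nat \<Rightarrow> real set" where
  "Eset U A i = {x\<in>space M. x \<in> A \<and> (\<forall>k. 1 \<le> k \<and> k \<le> i \<longrightarrow> (U^^k) x \<notin> A)}"

lemma fr_eq: "first_return U A x = (if x \<in> A \<and> ret U A x then (U ^^ Nr U A x) x else x)"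
  unfolding first_return_def ret_def Nr_def by simp

lemma Nr_props:
  assumes "ret U A x"
  shows "1 \<le> Nr U A x" "(U ^^ Nr U A x) x \<in> A" "\<And>k. 1 \<le> k \<Longrightarrow> k < Nr U A x \<Longrightarrow> (U^^k) x \<notin> A"
proof -
  from assms obtain n where n: "n \<ge> 1 \<and> (U ^^ n) x \<in> A" unfolding ret_def by blast
  have "Nr U A x \<ge> 1 \<and> (U ^^ Nr U A x) x \<in> A" unfolding Nr_def by (rule LeastI[of _ n]) (rule n)
  then show "1 \<le> Nr U A x" "(U ^^ Nr U A x) x \<in> A" by auto
  fix k assume "1 \<le> k" "k < Nr U A x"
  then show "(U^^k) x \<notin> A" unfolding Nr_def using not_less_Least by blast
qed

lemma Nr_eqI:
  assumes "1 \<le> n" "(U^^n) x \<in> A" "\<And>k. 1 \<le> k \<Longrightarrow> k < n \<Longrightarrow> (U^^k) x \<notin> A"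
  shows "Nr U A x = n" "ret U A x"
proof -
  show "ret U A x" using assms unfolding ret_def by blast
  show "Nr U A x = n" unfolding Nr_def
    by (rule Least_equality) (use assms in \<open>auto simp: not_less[symmetric]\<close>)
qed

lemma Dset_iff: "x \<in> Dset U A n \<longleftrightarrow> x \<in> space M \<and> x \<in> A \<and> ret U A x \<and> Nr U A x = n"
proof
  assume "x \<in> Dset U A n"
  then show "x \<in> space M \<and> x \<in> A \<and> ret U A x \<and> Nr U A x = n"
    unfolding Dset_def using Nr_eqI[of n U x A] by auto
next
  assume "x \<in> space M \<and> x \<in> A \<and> ret U A x \<and> Nr U A x = n"
  then show "x \<in> Dset U A n" unfolding Dset_def using Nr_props[of U A x] by auto
qed

context mpi
begin

lemma shift: "AE y in M. \<forall>n k. k \<le> n \<longrightarrow> (U^^k) ((V^^n) y) = (V^^(n-k)) y"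
proof -
  have "AE y in M. (U^^k) ((V^^k) ((V^^(n-k)) y)) = (V^^(n-k)) y" for n k
    by (rule mpi.AE_U[OF swapI UVpow])
  then have "AE y in M. \<forall>n k. (U^^k) ((V^^k) ((V^^(n-k)) y)) = (V^^(n-k)) y"
    by (simp add: AE_all_countable)
  then show ?thesis
  proof eventually_elim
    case (elim y)
    show ?case
    proof (intro allI impI)
      fix n k :: nat assume "k \<le> n"
      then have "(V^^n) y = (V^^k) ((V^^(n-k)) y)" using funpow_split[of "n-k" n V y] by simp
      with elim show "(U^^k) ((V^^n) y) = (V^^(n-k)) y" by simp
    qed
  qed
qed

context
  fixes A assumes A[measurable]: "A \<in> sets M"
begin

lemma ret_meas[measurable]: "Measurable.pred M (ret U A)"
  unfolding ret_def by measurable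

lemma Nr_meas[measurable]: "Nr U A \<in> measurable M (count_space UNIV)"
  unfolding Nr_def by measurable

lemma Dset_meas[measurable]: "Dset U A n \<in> sets M"
  unfolding Dset_def by measurable

lemma Eset_meas[measurable]: "Eset U A n \<in> sets M"
  unfolding Eset_def by measurable

lemma fr_meas[measurable]: "first_return U A \<in> measurable M M"
proof -
  have [measurable]: "(\<lambda>x. (U ^^ Nr U A x) x) \<in> measurable M M"
    by (rule measurable_compose_countable[where f="\<lambda>n x. (U^^n) x"]) measurable
  show ?thesis unfolding fr_eq[abs_def] by measurable
qed

lemma Vsum_D: "AE y in M. \<forall>c::ennreal. (\<Sum>n. indicator (Dset U A n) ((V^^n) y) * c) = indicator A y * c"
  using mpi.poincare[OF swapI A] shift AE_space
proof eventually_elim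
  case (elim y)
  note pc = elim(1) and sh = elim(2) and sp = elim(3)
  show ?case
  proof (cases "y \<in> A")
    case False
    have "(V^^n) y \<notin> Dset U A n" for n
    proof
      assume "(V^^n) y \<in> Dset U A n"
      then have "1 \<le> n" "(U^^n) ((V^^n) y) \<in> A" unfolding Dset_def by auto
      with sh False show False by auto
    qed
    with False show ?thesis by simp
  next
    case True
    with pc have r: "ret V A y" unfolding ret_def by blast
    define m where "m = Nr V A y"
    note mp = Nr_props[OF r, folded m_def]
    have inD: "(V^^m) y \<in> Dset U A m"
      unfolding Dset_def
    proof (intro CollectI conjI allI impI)
      show "(V^^m) y \<in> space M" using measurable_space[OF mpi.Upow_m[OF swapI] sp] .
      show "(V^^m) y \<in> A" "1 \<le> m" by (rule mp)+
      show "(U^^m) ((V^^m) y) \<in> A" using sh True by simp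
      fix k assume k: "1 \<le> k \<and> k < m"
      then have "(U^^k) ((V^^m) y) = (V^^(m-k)) y" using sh by simp
      moreover have "(V^^(m-k)) y \<notin> A" using k by (intro mp(3)) auto
      ultimately show "(U^^k) ((V^^m) y) \<notin> A" by simp
    qed
    have notD: "(V^^n) y \<notin> Dset U A n" if "n \<noteq> m" for n
    proof
      assume D: "(V^^n) y \<in> Dset U A n"
      then have n1: "1 \<le> n" and nA: "(V^^n) y \<in> A" and
        mn: "\<And>k. 1 \<le> k \<Longrightarrow> k < n \<Longrightarrow> (U^^k) ((V^^n) y) \<notin> A"
        unfolding Dset_def by auto
      have "m \<le> n" unfolding m_def Nr_def by (rule Least_le) (use n1 nA in auto)
      with that have "m < n" by simp
      then have "(U^^(n-m)) ((V^^n) y) \<notin> A" using mp(1) by (intro mn) auto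
      moreover have "(U^^(n-m)) ((V^^n) y) = (V^^m) y" using sh \<open>m < n\<close> by simp
      ultimately show False using mp(2) by simp
    qed
    show ?thesis
    proof
      fix c :: ennreal
      have "(\<Sum>n. indicator (Dset U A n) ((V^^n) y) * c) = indicator (Dset U A m) ((V^^m) y) * c"
        by (rule suminf_single_ennreal) (use notD in auto)
      then show "(\<Sum>n. indicator (Dset U A n) ((V^^n) y) * c) = indicator A y * c"
        using inD True by simp
    qed
  qed
qed

lemma Vsum_E: "AE y in M. (\<Sum>i. indicator (Eset U A i) ((V^^i) y)) \<le> (1::ennreal)"
  using shift
proof eventually_elim
  case (elim y)
  have no2: False if "i < j" "(V^^i) y \<in> Eset U A i" "(V^^j) y \<in> Eset U A j" for i j
  proof -
    have "(U^^(j-i)) ((V^^j) y) = (V^^i) y" using elim that by simp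
    moreover have "(V^^i) y \<in> A" using that unfolding Eset_def by auto
    moreover have "(U^^(j-i)) ((V^^j) y) \<notin> A" using that unfolding Eset_def by auto
    ultimately show False by simp
  qed
  show ?case
  proof (cases "\<exists>i. (V^^i) y \<in> Eset U A i")
    case True
    then obtain i where i: "(V^^i) y \<in> Eset U A i" by blast
    have "(\<Sum>j. indicator (Eset U A j) ((V^^j) y)) = (indicator (Eset U A i) ((V^^i) y) :: ennreal)"
    proof (rule suminf_single_ennreal)
      fix j assume "j \<noteq> i"
      then have "(V^^j) y \<notin> Eset U A j" using no2 i by (metis linorder_neqE_nat)
      then show "(indicator (Eset U A j) ((V^^j) y) :: ennreal) = 0" by simp
    qed
    then show ?thesis by (simp add: indicator_def)
  next
    case False
    then show ?thesis by simp
  qed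
qed

lemma fr_nn:
  assumes h[measurable]: "h \<in> borel_measurable M"
  shows "(\<integral>\<^sup>+ x. h (first_return U A x) \<partial>M) = (\<integral>\<^sup>+ x. h x \<partial>M)"
proof -
  have "AE x in M. h (first_return U A x) =
      indicator (space M - A) x * h x + (\<Sum>n. indicator (Dset U A n) x * h ((U^^n) x))"
    using poincare[OF A] AE_space
  proof eventually_elim
    case (elim x)
    show ?case
    proof (cases "x \<in> A")
      case False
      then have "x \<notin> Dset U A n" for n unfolding Dset_def by auto
      with False elim show ?thesis by (simp add: fr_eq)
    next
      case True
      with elim have r: "ret U A x" unfolding ret_def by blast
      have "(\<Sum>n. indicator (Dset U A n) x * h ((U^^n) x)) =
          indicator (Dset U A (Nr U A x)) x * h ((U^^(Nr U A x)) x)"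
        by (rule suminf_single_ennreal) (auto simp: Dset_iff)
      with True r elim show ?thesis by (simp add: fr_eq Dset_iff)
    qed
  qed
  then have "(\<integral>\<^sup>+ x. h (first_return U A x) \<partial>M) =
      (\<integral>\<^sup>+ x. indicator (space M - A) x * h x + (\<Sum>n. indicator (Dset U A n) x * h ((U^^n) x)) \<partial>M)"
    by (rule nn_integral_cong_AE)
  also have "\<dots> = (\<integral>\<^sup>+ x. indicator (space M - A) x * h x \<partial>M) +
      (\<Sum>n. \<integral>\<^sup>+ x. indicator (Dset U A n) x * h ((U^^n) x) \<partial>M)"
    by (simp add: nn_integral_add nn_integral_suminf)
  also have "(\<Sum>n. \<integral>\<^sup>+ x. indicator (Dset U A n) x * h ((U^^n) x) \<partial>M) =
      (\<Sum>n. \<integral>\<^sup>+ y. indicator (Dset U A n) ((V^^n) y) * h y \<partial>M)"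
    by (intro suminf_cong transfer) measurable
  also have "\<dots> = (\<integral>\<^sup>+ y. (\<Sum>n. indicator (Dset U A n) ((V^^n) y) * h y) \<partial>M)"
    by (rule nn_integral_suminf[symmetric]) measurable
  also have "\<dots> = (\<integral>\<^sup>+ y. indicator A y * h y \<partial>M)"
    by (rule nn_integral_cong_AE) (use Vsum_D in \<open>eventually_elim, auto\<close>)
  also have "(\<integral>\<^sup>+ x. indicator (space M - A) x * h x \<partial>M) + (\<integral>\<^sup>+ y. indicator A y * h y \<partial>M)
      = (\<integral>\<^sup>+ x. indicator (space M - A) x * h x + indicator A x * h x \<partial>M)"
    by (simp add: nn_integral_add)
  also have "\<dots> = (\<integral>\<^sup>+ x. h x \<partial>M)"
    by (rule nn_integral_cong) (auto simp: indicator_def)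
  finally show ?thesis .
qed

lemma fr_distr: "distr M M (first_return U A) = M"
proof (rule measure_eqI)
  show "sets (distr M M (first_return U A)) = sets M" by simp
  fix B assume "B \<in> sets (distr M M (first_return U A))"
  then have B[measurable]: "B \<in> sets M" by simp
  have "emeasure (distr M M (first_return U A)) B = (\<integral>\<^sup>+ x. indicator B x \<partial>distr M M (first_return U A))"
    by (simp add: nn_integral_indicator)
  also have "\<dots> = (\<integral>\<^sup>+ x. indicator B (first_return U A x) \<partial>M)"
    by (rule nn_integral_distr) measurable
  also have "\<dots> = (\<integral>\<^sup>+ x. indicator B x \<partial>M)" by (rule fr_nn) measurable
  also have "\<dots> = emeasure M B" by simp
  finally show "emeasure (distr M M (first_return U A)) B = emeasure M B" .
qed

lemma fr_inv: "AE x in M. first_return V A (first_return U A x) = x"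
  using poincare[OF A] mpi.shift[OF swapI]
proof eventually_elim
  case (elim x)
  show ?case
  proof (cases "x \<in> A")
    case False then show ?thesis by (simp add: fr_eq)
  next
    case True
    with elim have r: "ret U A x" unfolding ret_def by blast
    define n where "n = Nr U A x"
    note np = Nr_props[OF r, folded n_def]
    define y where "y = (U^^n) x"
    have Vy: "(V^^k) y = (U^^(n-k)) x" if "k \<le> n" for k
      using elim(2) that unfolding y_def by simp
    have "Nr V A y = n \<and> ret V A y"
    proof -
      have a: "(V^^n) y \<in> A" using Vy[of n] True by simp
      have b: "(V^^k) y \<notin> A" if "1 \<le> k" "k < n" for k
        using Vy[of k] that np(3)[of "n-k"] by simp
      show ?thesis using Nr_eqI[of n V y A, OF np(1) a b] by blast
    qed
    moreover have "y \<in> A" using np(2) y_def by simp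
    moreover have "first_return U A x = y" using True r by (simp add: fr_eq y_def n_def)
    ultimately show ?thesis using Vy[of n] by (simp add: fr_eq)
  qed
qed

end
end

definition Rel :: "(real \<Rightarrow> real) \<Rightarrow> int \<Rightarrow> real \<Rightarrow> real \<Rightarrow> bool" where
  "Rel T k x y \<longleftrightarrow> (k \<ge> 0 \<longrightarrow> (T ^^ nat k) x = y) \<and> (k < 0 \<longrightarrow> (T ^^ nat (- k)) y = x)"

definition Good0 :: "(real \<Rightarrow> real) \<Rightarrow> (real \<Rightarrow> real) \<Rightarrow> real \<Rightarrow> bool" where
  "Good0 T W x \<longleftrightarrow> (\<forall>i. W (T ((T^^i) x)) = (T^^i) x)"

lemma Rel_zero: "Rel T 0 x x" unfolding Rel_def by simp

lemma Rel_sym: "Rel T k x y \<Longrightarrow> Rel T (-k) y x"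
  unfolding Rel_def by (cases "k = 0") auto

lemma Good0_iter: "Good0 T W x \<Longrightarrow> Good0 T W ((T^^j) x)"
  unfolding Good0_def by (metis comp_apply funpow_add)

lemma cancel: "Good0 T W z \<Longrightarrow> Good0 T W w \<Longrightarrow> (T^^n) z = (T^^n) w \<Longrightarrow> z = w"
proof (induction n)
  case 0 then show ?case by simp
next
  case (Suc n)
  from Suc.prems(3) have "T ((T^^n) z) = T ((T^^n) w)" by simp
  then have "W (T ((T^^n) z)) = W (T ((T^^n) w))" by simp
  then have "(T^^n) z = (T^^n) w" using Suc.prems(1,2) unfolding Good0_def by metis
  then show ?case using Suc by blast
qed

lemma fp_add: "(T^^(m+n)) x = (T^^m) ((T^^n) x)"
  by (simp add: funpow_add)

lemma Rel_trans:
  assumes gx: "Good0 T W x" and gz: "Good0 T W z" and r1: "Rel T a x y" and r2: "Rel T b y z"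
  shows "Rel T (a + b) x z"
proof (cases "a \<ge> 0")
  case True
  then obtain p where p: "a = int p" by (metis nonneg_eq_int)
  with r1 have y: "(T^^p) x = y" unfolding Rel_def by simp
  show ?thesis
  proof (cases "b \<ge> 0")
    case True
    then obtain q where q: "b = int q" by (metis nonneg_eq_int)
    with r2 have "(T^^q) y = z" unfolding Rel_def by simp
    then have "(T^^(p+q)) x = z" using y fp_add[of q p T x] by (simp add: add.commute)
    with p q show ?thesis unfolding Rel_def by (simp add: nat_add_distrib)
  next
    case False
    then obtain q where q: "b = - int q" "q > 0" by (metis neg_int_cases linorder_not_le)
    with r2 have z: "(T^^q) z = y" unfolding Rel_def by simp
    show ?thesis
    proof (cases "p \<ge> q")
      case True
      have "(T^^q) ((T^^(p-q)) x) = (T^^q) z" using y z True fp_add[of q "p-q" T x] by simp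
      then have "(T^^(p-q)) x = z" using cancel Good0_iter[OF gx] gz by blast
      moreover have "a + b = int (p - q)" using p q True by simp
      ultimately show ?thesis unfolding Rel_def by simp
    next
      case False
      have "(T^^p) ((T^^(q-p)) z) = (T^^p) x" using y z False fp_add[of p "q-p" T z] by simp
      then have "(T^^(q-p)) z = x" using cancel Good0_iter[OF gz] gx by blast
      moreover have "a + b = - int (q - p)" "q - p > 0" using p q False by auto
      ultimately show ?thesis unfolding Rel_def by (simp only: nat_int minus_minus) simp
    qed
  qed
next
  case False
  then obtain p where p: "a = - int p" "p > 0" by (metis neg_int_cases linorder_not_le)
  with r1 have x: "(T^^p) y = x" unfolding Rel_def by simp
  show ?thesis
  proof (cases "b \<ge> 0")
    case True
    then obtain q where q: "b = int q" by (metis nonneg_eq_int)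
    with r2 have z: "(T^^q) y = z" unfolding Rel_def by simp
    show ?thesis
    proof (cases "q \<ge> p")
      case True
      have "(T^^(q-p)) x = z" using x z True fp_add[of "q-p" p T y] by simp
      moreover have "a + b = int (q - p)" using p q True by simp
      ultimately show ?thesis unfolding Rel_def by simp
    next
      case False
      have "(T^^(p-q)) z = x" using x z False fp_add[of "p-q" q T y] by simp
      moreover have "a + b = - int (p - q)" "p - q > 0" using p q False by auto
      ultimately show ?thesis unfolding Rel_def by (simp only: nat_int minus_minus) simp
    qed
  next
    case False
    then obtain q where q: "b = - int q" "q > 0" by (metis neg_int_cases linorder_not_le)
    with r2 have z: "(T^^q) z = y" unfolding Rel_def by simp
    have "(T^^(p+q)) z = x" using x z fp_add[of p q T z] by simp
    moreover have "a + b = - int (p + q)" using p q by simp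
    ultimately show ?thesis unfolding Rel_def using p q by (simp only: nat_int minus_minus) simp
  qed
qed

lemma Rel_unique:
  assumes gx: "Good0 T W x" and ap: "\<forall>n\<ge>1. (T^^n) x \<noteq> x"
    and r1: "Rel T a x y" and r2: "Rel T b x y"
  shows "a = b"
proof (rule ccontr)
  assume ne: "a \<noteq> b"
  have "Rel T (a + - b) x x" by (rule Rel_trans[OF gx gx r1 Rel_sym[OF r2]])
  then have r: "Rel T (a - b) x x" by simp
  show False
  proof (cases "a - b \<ge> 0")
    case True
    with ne have "nat (a - b) \<ge> 1" by simp
    with r True ap show False unfolding Rel_def by auto
  next
    case False
    then have "nat (-(a - b)) \<ge> 1" by simp
    with r False ap show False unfolding Rel_def by auto
  qed
qed

lemma is_cocycle_iff: "is_cocycle T U c \<longleftrightarrow> c \<in> measurable M (count_space UNIV) \<and> (AE x in M. Rel T (c x) x (U x))"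
  unfolding is_cocycle_def Rel_def by simp

lemma Aut_mpi: "U \<in> Aut \<Longrightarrow> \<exists>V. mpi U V"
  unfolding Aut_def mpi_def by blast

lemma cocycle_unique:
  assumes T: "T \<in> Aut" and ap: "aperiodic T" and c1: "is_cocycle T U c1" and c2: "is_cocycle T U c2"
  shows "AE x in M. c1 x = c2 x"
proof -
  obtain W where mW: "mpi T W" using Aut_mpi[OF T] by blast
  have "AE x in M. W (T ((T^^i) x)) = (T^^i) x" for i by (rule mpi.AE_U[OF mW mpi.VU[OF mW]])
  then have g: "AE x in M. Good0 T W x" unfolding Good0_def by (simp add: AE_all_countable)
  have "AE x in M. n \<ge> 1 \<longrightarrow> (T^^n) x \<noteq> x" for n
    using ap unfolding aperiodic_def by (cases "n \<ge> 1") auto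
  then have a: "AE x in M. \<forall>n\<ge>1. (T^^n) x \<noteq> x" by (simp add: AE_all_countable)
  have e1: "AE x in M. Rel T (c1 x) x (U x)" using c1 by (simp add: is_cocycle_iff)
  have e2: "AE x in M. Rel T (c2 x) x (U x)" using c2 by (simp add: is_cocycle_iff)
  from g a e1 e2
  show ?thesis
    by eventually_elim (rule Rel_unique, auto)
qed

lemma cocycle_ae:
  assumes T: "T \<in> Aut" and ap: "aperiodic T" and c: "is_cocycle T U c"
  shows "AE x in M. cocycle T U x = c x"
proof -
  have "is_cocycle T U (cocycle T U)" unfolding cocycle_def by (rule someI[of _ c]) (rule c)
  then show ?thesis using cocycle_unique[OF T ap _ c] by blast
qed

lemma cocycle_id:
  assumes T: "T \<in> Aut" and ap: "aperiodic T"
  shows "AE x in M. cocycle T id x = 0"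
  by (rule cocycle_ae[OF T ap]) (simp add: is_cocycle_iff Rel_zero)

definition retc :: "(real \<Rightarrow> real) \<Rightarrow> real set \<Rightarrow> (real \<Rightarrow> int) \<Rightarrow> real \<Rightarrow> int" where
  "retc U A c x = (if x \<in> A \<and> ret U A x then (\<Sum>i<Nr U A x. c ((U^^i) x)) else 0)"

lemma phi_nonneg: "metric_compatible \<phi> \<Longrightarrow> t \<ge> 0 \<Longrightarrow> \<phi> t \<ge> 0"
  unfolding metric_compatible_def by (cases "t = 0") auto

lemma phi_sum:
  fixes n :: nat and a :: "nat \<Rightarrow> int"
  assumes mc: "metric_compatible \<phi>"
  shows "\<phi> (real_of_int \<bar>\<Sum>i<n. a i\<bar>) \<le> (\<Sum>i<n. \<phi> (real_of_int \<bar>a i\<bar>))"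
proof (induction n)
  case 0 then show ?case using mc unfolding metric_compatible_def by simp
next
  case (Suc n)
  have mono: "\<phi> s \<le> \<phi> t" if "0 \<le> s" "s \<le> t" for s t using mc that unfolding metric_compatible_def by blast
  have sub: "\<phi> (s + t) \<le> \<phi> s + \<phi> t" if "0 \<le> s" "0 \<le> t" for s t using mc that unfolding metric_compatible_def by blast
  have tri: "real_of_int \<bar>S + b\<bar> \<le> real_of_int \<bar>S\<bar> + real_of_int \<bar>b\<bar>" for S b :: int
    by (metis abs_triangle_ineq of_int_add of_int_le_iff)
  have "\<phi> (real_of_int \<bar>\<Sum>i<Suc n. a i\<bar>) = \<phi> (real_of_int \<bar>(\<Sum>i<n. a i) + a n\<bar>)" by simp
  also have "\<dots> \<le> \<phi> (real_of_int \<bar>\<Sum>i<n. a i\<bar> + real_of_int \<bar>a n\<bar>)"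
    by (rule mono[OF _ tri]) simp
  also have "\<dots> \<le> \<phi> (real_of_int \<bar>\<Sum>i<n. a i\<bar>) + \<phi> (real_of_int \<bar>a n\<bar>)" by (rule sub) auto
  also have "\<dots> \<le> (\<Sum>i<Suc n. \<phi> (real_of_int \<bar>a i\<bar>))" using Suc by simp
  finally show ?case .
qed

context mpi
begin

context
  fixes A T W c
  assumes A[measurable]: "A \<in> sets M" and mT: "mpi T W" and cc: "is_cocycle T U c"
begin

lemma cm[measurable]: "c \<in> measurable M (count_space UNIV)"
  using cc by (simp add: is_cocycle_iff)

lemma retc_meas[measurable]: "retc U A c \<in> measurable M (count_space UNIV)"
proof -
  have sm[measurable]: "(\<lambda>x. \<Sum>i<n. c ((U^^i) x)) \<in> measurable M (count_space UNIV)" for n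
  proof (induction n)
    case 0 then show ?case by simp
  next
    case (Suc n)
    note Suc[measurable]
    have [measurable]: "(\<lambda>x. c ((U^^n) x)) \<in> measurable M (count_space UNIV)"
      by (rule measurable_compose[OF Upow_m cm])
    show ?case by simp
  qed
  have [measurable]: "(\<lambda>x. \<Sum>i<Nr U A x. c ((U^^i) x)) \<in> measurable M (count_space UNIV)"
    by (rule measurable_compose_countable[where f="\<lambda>n x. \<Sum>i<n. c ((U^^i) x)"]) measurable
  show ?thesis unfolding retc_def[abs_def] by measurable
qed

lemma retc_rel: "AE x in M. Rel T (retc U A c x) x (first_return U A x)"
proof -
  have "AE x in M. W (T ((T^^i) x)) = (T^^i) x" for i by (rule mpi.AE_U[OF mT mpi.VU[OF mT]])
  then have g: "AE x in M. Good0 T W x" unfolding Good0_def by (simp add: AE_all_countable)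
  have "AE x in M. Good0 T W ((U^^i) x)" for i by (rule AE_U[OF g])
  then have g2: "AE x in M. \<forall>i. Good0 T W ((U^^i) x)" by (simp add: AE_all_countable)
  have r: "AE x in M. Rel T (c x) x (U x)" using cc by (simp add: is_cocycle_iff)
  have "AE x in M. Rel T (c ((U^^i) x)) ((U^^i) x) (U ((U^^i) x))" for i by (rule AE_U[OF r])
  then have r2: "AE x in M. \<forall>i. Rel T (c ((U^^i) x)) ((U^^i) x) (U ((U^^i) x))" by (simp add: AE_all_countable)
  from g2 r2 show ?thesis
  proof eventually_elim
    case (elim x)
    have sumrel: "Rel T (\<Sum>i<n. c ((U^^i) x)) x ((U^^n) x)" for n
    proof (induction n)
      case 0 then show ?case by (simp add: Rel_zero)
    next
      case (Suc n)
      have g0: "Good0 T W x" using elim(1)[rule_format, of 0] by simp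
      have g1: "Good0 T W (U ((U^^n) x))" using elim(1)[rule_format, of "Suc n"] by simp
      have r1: "Rel T (c ((U^^n) x)) ((U^^n) x) (U ((U^^n) x))" using elim(2) by blast
      have "Rel T ((\<Sum>i<n. c ((U^^i) x)) + c ((U^^n) x)) x (U ((U^^n) x))"
        by (rule Rel_trans[OF g0 g1 Suc r1])
      then show ?case by simp
    qed
    show ?case
      by (cases "x \<in> A \<and> ret U A x") (auto simp: retc_def fr_eq sumrel Rel_zero)
  qed
qed

lemma retc_cocycle: "is_cocycle T (first_return U A) (retc U A c)"
  using retc_rel by (simp add: is_cocycle_iff)

lemma retc_ineq:
  assumes mc: "metric_compatible \<phi>"
  shows "(\<integral>\<^sup>+ x. ennreal (\<phi> (real_of_int \<bar>retc U A c x\<bar>)) \<partial>M) \<le> (\<integral>\<^sup>+ x. ennreal (\<phi> (real_of_int \<bar>c x\<bar>)) \<partial>M)"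
proof -
  define f where "f x = ennreal (\<phi> (real_of_int \<bar>c x\<bar>))" for x
  have fm[measurable]: "f \<in> borel_measurable M" unfolding f_def by measurable
  have pw: "ennreal (\<phi> (real_of_int \<bar>retc U A c x\<bar>)) \<le> (\<Sum>i. indicator (Eset U A i) x * f ((U^^i) x))"
    if sp: "x \<in> space M" for x
  proof (cases "x \<in> A \<and> ret U A x")
    case False
    then have "retc U A c x = 0" unfolding retc_def by auto
    then have "\<phi> (real_of_int \<bar>retc U A c x\<bar>) = 0" using mc unfolding metric_compatible_def by simp
    then show ?thesis by simp
  next
    case True
    define n where "n = Nr U A x"
    note np = Nr_props[of U A x, folded n_def]
    have "ennreal (\<phi> (real_of_int \<bar>retc U A c x\<bar>)) = ennreal (\<phi> (real_of_int \<bar>\<Sum>i<n. c ((U^^i) x)\<bar>))"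
      using True by (simp add: retc_def n_def)
    also have "\<dots> \<le> ennreal (\<Sum>i<n. \<phi> (real_of_int \<bar>c ((U^^i) x)\<bar>))"
      by (rule ennreal_leI, rule phi_sum[OF mc])
    also have "\<dots> = (\<Sum>i<n. f ((U^^i) x))"
      unfolding f_def by (rule sum_ennreal[symmetric]) (auto intro: phi_nonneg[OF mc])
    also have "\<dots> = (\<Sum>i<n. indicator (Eset U A i) x * f ((U^^i) x))"
    proof (rule sum.cong)
      fix i assume "i \<in> {..<n}"
      then have "x \<in> Eset U A i" unfolding Eset_def using sp True np(3) by auto
      then show "f ((U^^i) x) = indicator (Eset U A i) x * f ((U^^i) x)" by simp
    qed simp
    also have "\<dots> \<le> (\<Sum>i. indicator (Eset U A i) x * f ((U^^i) x))"
      by (rule sum_le_suminf) auto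
    finally show ?thesis .
  qed
  have "(\<integral>\<^sup>+ x. ennreal (\<phi> (real_of_int \<bar>retc U A c x\<bar>)) \<partial>M) \<le>
      (\<integral>\<^sup>+ x. (\<Sum>i. indicator (Eset U A i) x * f ((U^^i) x)) \<partial>M)"
    by (rule nn_integral_mono) (rule pw)
  also have "\<dots> = (\<Sum>i. \<integral>\<^sup>+ x. indicator (Eset U A i) x * f ((U^^i) x) \<partial>M)"
    by (rule nn_integral_suminf) measurable
  also have "\<dots> = (\<Sum>i. \<integral>\<^sup>+ y. indicator (Eset U A i) ((V^^i) y) * f y \<partial>M)"
    by (intro suminf_cong transfer) measurable
  also have "\<dots> = (\<integral>\<^sup>+ y. (\<Sum>i. indicator (Eset U A i) ((V^^i) y) * f y) \<partial>M)"
    by (rule nn_integral_suminf[symmetric]) measurable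
  also have "\<dots> = (\<integral>\<^sup>+ y. (\<Sum>i. indicator (Eset U A i) ((V^^i) y)) * f y \<partial>M)"
    by simp
  also have "\<dots> \<le> (\<integral>\<^sup>+ y. 1 * f y \<partial>M)"
  proof (rule nn_integral_mono_AE)
    show "AE y in M. (\<Sum>i. indicator (Eset U A i) ((V^^i) y)) * f y \<le> 1 * f y"
      using Vsum_E[OF A] by eventually_elim (rule mult_right_mono, auto)
  qed
  finally show ?thesis by (simp add: f_def)
qed

end
end

theorem mainTheorem14:
  assumes "T \<in> Aut" and "aperiodic T" and "metric_compatible \<phi>"
    and "U \<in> full_group_phi \<phi> T" and "A \<in> sets X\<mu>"
  shows "d_phi \<phi> T (first_return U A) id \<le> d_phi \<phi> T U id
         \<and> first_return U A \<in> full_group_phi \<phi> T"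
proof -
  note T = assms(1) and ap = assms(2) and mc = assms(3) and A = assms(5)
  have UA: "U \<in> Aut" and ex: "\<exists>c. is_cocycle T U c"
    and fin: "(\<integral>\<^sup>+ x. ennreal (\<phi> (real_of_int \<bar>cocycle T U x\<bar>)) \<partial>M) < \<infinity>"
    using assms(4) unfolding full_group_phi_def full_group_def by auto
  obtain V where mU: "mpi U V" using Aut_mpi[OF UA] by blast
  obtain W where mT: "mpi T W" using Aut_mpi[OF T] by blast
  define c where "c = cocycle T U"
  have ccU: "is_cocycle T U c" unfolding c_def cocycle_def using ex by (metis someI)
  have coc: "is_cocycle T (first_return U A) (retc U A c)"
    by (rule mpi.retc_cocycle[OF mU A mT ccU])
  have ae1: "AE x in M. cocycle T (first_return U A) x = retc U A c x"
    by (rule cocycle_ae[OF T ap coc])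
  have ae0: "AE x in M. cocycle T id x = 0" by (rule cocycle_id[OF T ap])
  have d1: "d_phi \<phi> T (first_return U A) id = (\<integral>\<^sup>+ x. ennreal (\<phi> (real_of_int \<bar>retc U A c x\<bar>)) \<partial>M)"
    unfolding d_phi_def by (rule nn_integral_cong_AE) (use ae0 ae1 in \<open>eventually_elim, simp\<close>)
  have d2: "d_phi \<phi> T U id = (\<integral>\<^sup>+ x. ennreal (\<phi> (real_of_int \<bar>c x\<bar>)) \<partial>M)"
    unfolding d_phi_def c_def by (rule nn_integral_cong_AE) (use ae0 in \<open>eventually_elim, simp\<close>)
  have ineq: "(\<integral>\<^sup>+ x. ennreal (\<phi> (real_of_int \<bar>retc U A c x\<bar>)) \<partial>M) \<le> (\<integral>\<^sup>+ x. ennreal (\<phi> (real_of_int \<bar>c x\<bar>)) \<partial>M)"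
    by (rule mpi.retc_ineq[OF mU A mT ccU mc])
  have d3: "(\<integral>\<^sup>+ x. ennreal (\<phi> (real_of_int \<bar>cocycle T (first_return U A) x\<bar>)) \<partial>M)
      = (\<integral>\<^sup>+ x. ennreal (\<phi> (real_of_int \<bar>retc U A c x\<bar>)) \<partial>M)"
    by (rule nn_integral_cong_AE) (use ae1 in \<open>eventually_elim, simp\<close>)
  have aut: "first_return U A \<in> Aut"
    unfolding Aut_def
  proof (intro CollectI conjI bexI)
    show "first_return U A \<in> measurable M M" by (rule mpi.fr_meas[OF mU A])
    show "distr M M (first_return U A) = M" by (rule mpi.fr_distr[OF mU A])
    show "first_return V A \<in> measurable M M" by (rule mpi.fr_meas[OF mpi.swapI[OF mU] A])
    show "AE x in M. first_return V A (first_return U A x) = x" by (rule mpi.fr_inv[OF mU A])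
    show "AE x in M. first_return U A (first_return V A x) = x" by (rule mpi.fr_inv[OF mpi.swapI[OF mU] A])
  qed
  have "first_return U A \<in> full_group_phi \<phi> T"
    unfolding full_group_phi_def full_group_def
    using aut coc d3 ineq fin by (auto simp: c_def intro: le_less_trans)
  then show ?thesis using d1 d2 ineq by simp
qed

end
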